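(* (i) For any $N\in\mathbb{N}$ and $k\in\mathbb{Z}_+$, $$\gamma_N^{-(N-2),k}=2^k\Bigl(\frac N2+k-2\Bigr)_k(N+k-3)_k.$$ (ii) For any $k\in\mathbb{N}$, $\ell_2^k=2^{k-1}((k-1)!)^2$.
   Context: $|x|_N$ is the Euclidean norm on $\mathbb{R}^N$, $\log$ the natural logarithm, $I_N=\{1,\ldots,N\}$, $D_i=\partial_{x_{i_1}}\cdots\partial_{x_{i_k}}$ for $i=(i_1,\ldots,i_k)\in I_N^k$, and $|\nabla_N^k u(x)|_{N^k}=\bigl(\sum_{i\in I_N^k}(D_iu(x))^2\bigr)^{1/2}$ (for $k=0$ this is $|u(x)|$). It is known that for $k\in\mathbb{Z}_+$, $s\in\mathbb{R}$ the function $x\mapsto(|x|_N^{k-s}|\nabla_N^k[|x|_N^s]|_{N^k})^2$ is constant on $\mathbb{R}^N\setminus\{0\}$; its value is denoted $\gamma_N^{s,k}$. For $k\in\mathbb{N}$ the function $x\mapsto(|x|_N^{k}|\nabla_N^k[\log|x|_N]|_{N^k})^2$ is constant on $\mathbb{R}^N\setminus\{0\}$, with value $\ell_N^k$. $(\nu)_k=\prod_{j=0}^{k-1}(\nu-j)$ for $k\in\mathbb{N}$, $(\nu)_0=1$. *)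

theory Defs
  imports "HOL-Analysis.Analysis"
begin

text \<open>Points of R^N are modelled as functions nat => real that vanish at indices >= N.\<close>

definition eucl_norm :: "nat \<Rightarrow> (nat \<Rightarrow> real) \<Rightarrow> real" where
  "eucl_norm N x = sqrt (\<Sum>i<N. (x i)\<^sup>2)"

definition punctured :: "nat \<Rightarrow> (nat \<Rightarrow> real) set" where
  "punctured N = {x. (\<forall>i. N \<le> i \<longrightarrow> x i = 0) \<and> x \<noteq> (\<lambda>_. 0)}"

definition partial :: "nat \<Rightarrow> ((nat \<Rightarrow> real) \<Rightarrow> real) \<Rightarrow> (nat \<Rightarrow> real) \<Rightarrow> real" where
  "partial j u x = deriv (\<lambda>t. u (x(j := t))) (x j)"

fun dpart :: "nat list \<Rightarrow> ((nat \<Rightarrow> real) \<Rightarrow> real) \<Rightarrow> (nat \<Rightarrow> real) \<Rightarrow> real" where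
  "dpart [] u = u"
| "dpart (j # js) u = partial j (dpart js u)"

definition grad_norm :: "nat \<Rightarrow> nat \<Rightarrow> ((nat \<Rightarrow> real) \<Rightarrow> real) \<Rightarrow> (nat \<Rightarrow> real) \<Rightarrow> real" where
  "grad_norm N k u x =
     sqrt (\<Sum>is\<in>{is. length is = k \<and> set is \<subseteq> {..<N}}. (dpart is u x)\<^sup>2)"

text \<open>gamma_N^{s,k}: the constant value of (|x|^{k-s} |nabla^k |x|^s|)^2 on R^N \ {0}.\<close>
definition gamma :: "nat \<Rightarrow> real \<Rightarrow> nat \<Rightarrow> real" where
  "gamma N s k = (THE c. \<forall>x\<in>punctured N.
      (eucl_norm N x powr (real k - s) * grad_norm N k (\<lambda>y. eucl_norm N y powr s) x)\<^sup>2 = c)"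

text \<open>ell_N^k: the constant value of (|x|^k |nabla^k log |x||)^2 on R^N \ {0}.\<close>
definition ell :: "nat \<Rightarrow> nat \<Rightarrow> real" where
  "ell N k = (THE c. \<forall>x\<in>punctured N.
      (eucl_norm N x ^ k * grad_norm N k (\<lambda>y. ln (eucl_norm N y)) x)\<^sup>2 = c)"

text \<open>Falling factorial (nu)_k = prod_{j=0}^{k-1} (nu - j).\<close>
definition falling :: "real \<Rightarrow> nat \<Rightarrow> real" where
  "falling \<nu> k = (\<Prod>j<k. (\<nu> - real j))"

end

theory Submission
  imports Defs
begin

datatype ex = Cst real | Var nat | Rp real | Lg | Add ex ex | Mul ex ex

fun ev :: "nat \<Rightarrow> ex \<Rightarrow> (nat \<Rightarrow> real) \<Rightarrow> real" where
  "ev N (Cst c) x = c"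
| "ev N (Var i) x = x i"
| "ev N (Rp q) x = eucl_norm N x powr q"
| "ev N Lg x = ln (eucl_norm N x)"
| "ev N (Add a b) x = ev N a x + ev N b x"
| "ev N (Mul a b) x = ev N a x * ev N b x"

fun ds :: "nat \<Rightarrow> ex \<Rightarrow> ex" where
  "ds j (Cst c) = Cst 0"
| "ds j (Var i) = Cst (if i = j then 1 else 0)"
| "ds j (Rp q) = Mul (Cst q) (Mul (Var j) (Rp (q - 2)))"
| "ds j Lg = Mul (Var j) (Rp (-2))"
| "ds j (Add a b) = Add (ds j a) (ds j b)"
| "ds j (Mul a b) = Add (Mul (ds j a) b) (Mul a (ds j b))"

lemma norm_pos: assumes "x \<in> punctured N" shows "eucl_norm N x > 0"
proof -
  from assms have z: "\<forall>i. N \<le> i \<longrightarrow> x i = 0" and nz: "x \<noteq> (\<lambda>_. 0)" by (auto simp: punctured_def)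
  then obtain i where "x i \<noteq> 0" by auto
  with z have i: "i < N" by (meson not_le)
  have "0 < (x i)\<^sup>2" using \<open>x i \<noteq> 0\<close> by simp
  also have "\<dots> \<le> (\<Sum>i<N. (x i)\<^sup>2)" using i by (intro member_le_sum) auto
  finally show ?thesis by (simp add: eucl_norm_def)
qed

lemma norm_sq: "(eucl_norm N x)\<^sup>2 = (\<Sum>i<N. (x i)\<^sup>2)"
  by (simp add: eucl_norm_def sum_nonneg)

lemma norm_slice_deriv:
  assumes "j < N" "eucl_norm N x > 0"
  shows "((\<lambda>t. eucl_norm N (x(j := t))) has_real_derivative (x j / eucl_norm N x)) (at (x j))"
proof -
  define c where "c = (\<Sum>i\<in>{..<N} - {j}. (x i)\<^sup>2)"
  have S: "(\<Sum>i<N. ((x(j:=t)) i)\<^sup>2) = t\<^sup>2 + c" for t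
  proof -
    have "(\<Sum>i<N. ((x(j:=t)) i)\<^sup>2) = (\<Sum>i<N. (if i = j then t\<^sup>2 else (x i)\<^sup>2))"
      by (intro sum.cong) auto
    also have "\<dots> = t\<^sup>2 + c" using assms(1) unfolding c_def
      by (subst sum.remove[of _ j]) (auto intro!: sum.cong)
    finally show ?thesis .
  qed
  have e: "eucl_norm N (x(j := t)) = sqrt (t\<^sup>2 + c)" for t unfolding eucl_norm_def S by (rule refl)
  have ex: "eucl_norm N x = sqrt ((x j)\<^sup>2 + c)" using e[of "x j"] by simp
  have pos: "(x j)\<^sup>2 + c > 0" using assms(2) ex by auto
  have "((\<lambda>t. sqrt (t\<^sup>2 + c)) has_real_derivative (inverse (sqrt ((x j)\<^sup>2 + c)) / 2 * (2 * x j))) (at (x j))"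
    by (rule DERIV_chain2[of sqrt _ "\<lambda>t. t\<^sup>2 + c", OF DERIV_real_sqrt[OF pos]]) (auto intro!: derivative_eq_intros)
  then show ?thesis unfolding e ex by (simp add: field_simps)
qed

lemma ev_deriv:
  assumes "x \<in> punctured N" "j < N"
  shows "((\<lambda>t. ev N e (x(j := t))) has_real_derivative ev N (ds j e) x) (at (x j))"
proof (induction e)
  case (Cst c) then show ?case by simp
next
  case (Var i) then show ?case by (auto intro!: derivative_eq_intros)
next
  case (Rp q)
  have r: "eucl_norm N x > 0" using norm_pos[OF assms(1)] .
  have "((\<lambda>t. eucl_norm N (x(j := t)) powr q) has_real_derivative
      (q * eucl_norm N x powr (q - 1)) * (x j / eucl_norm N x)) (at (x j))"
    using DERIV_chain2[of "\<lambda>z. z powr q" _ "\<lambda>t. eucl_norm N (x(j := t))", OF has_real_derivative_powr[of "eucl_norm N (x(j:=x j))" q] norm_slice_deriv[OF assms(2) r]] r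
    by simp
  moreover have "(q * eucl_norm N x powr (q - 1)) * (x j / eucl_norm N x) = q * (x j * eucl_norm N x powr (q - 2))"
    using r by (simp add: powr_diff field_simps powr_add[symmetric] power2_eq_square)
  ultimately show ?case by (simp only: ev.simps ds.simps)
next
  case Lg
  have r: "eucl_norm N x > 0" using norm_pos[OF assms(1)] .
  have "((\<lambda>t. ln (eucl_norm N (x(j := t)))) has_real_derivative
      inverse (eucl_norm N x) * (x j / eucl_norm N x)) (at (x j))"
    using DERIV_chain2[of ln _ "\<lambda>t. eucl_norm N (x(j := t))", OF DERIV_ln[of "eucl_norm N (x(j:=x j))"] norm_slice_deriv[OF assms(2) r]] r
    by simp
  moreover have "inverse (eucl_norm N x) * (x j / eucl_norm N x) = x j * eucl_norm N x powr (-2)"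
    using r by (simp add: powr_minus field_simps power2_eq_square)
  ultimately show ?case by (simp only: ev.simps ds.simps)
next
  case (Add a b) then show ?case by (auto intro!: derivative_eq_intros)
next
  case (Mul a b)
  have triv: "(\<lambda>a. if a = j then x j else x a) = x" by auto
  from Mul show ?case by (auto intro!: derivative_eq_intros simp: triv)
qed

lemma partial_ev:
  assumes "x \<in> punctured N" "j < N"
  shows "partial j (ev N e) x = ev N (ds j e) x"
  unfolding partial_def using DERIV_imp_deriv[OF ev_deriv[OF assms]] by simp

lemma partial_local:
  assumes eq: "\<forall>y\<in>punctured N. f y = g y" and x: "x \<in> punctured N" and j: "j < N"
  shows "partial j f x = partial j g x"
proof -
  define U where "U = - {t. x(j:=t) = (\<lambda>_. 0)}"
  have sub: "{t. x(j:=t) = (\<lambda>_. 0)} \<subseteq> {0}"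
  proof
    fix t assume "t \<in> {t. x(j:=t) = (\<lambda>_. 0)}"
    then have "(x(j:=t)) j = 0" by simp
    then show "t \<in> {0}" by simp
  qed
  have "open U" unfolding U_def
    by (intro open_Compl finite_imp_closed finite_subset[OF sub]) auto
  moreover have "x j \<in> U" using x by (auto simp: U_def punctured_def)
  ultimately have ev1: "eventually (\<lambda>t. t \<in> U) (nhds (x j))" by (rule eventually_nhds_in_open)
  have "t \<in> U \<Longrightarrow> x(j:=t) \<in> punctured N" for t
    using x j by (auto simp: U_def punctured_def)
  then have "eventually (\<lambda>t. f (x(j:=t)) = g (x(j:=t))) (nhds (x j))"
    using eq by (auto intro: eventually_mono[OF ev1])
  then show ?thesis unfolding partial_def by (rule deriv_cong_ev) simp
qed

lemma ds_cong:
  assumes "\<forall>y\<in>punctured N. ev N e1 y = ev N e2 y" "x \<in> punctured N" "j < N"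
  shows "ev N (ds j e1) x = ev N (ds j e2) x"
  using partial_local[OF assms] partial_ev[OF assms(2,3)] by metis

fun dss :: "nat list \<Rightarrow> ex \<Rightarrow> ex" where
  "dss [] e = e"
| "dss (j # js) e = ds j (dss js e)"

lemma dpart_ev:
  assumes "set js \<subseteq> {..<N}"
  shows "\<forall>x\<in>punctured N. dpart js (ev N e) x = ev N (dss js e) x"
  using assms
proof (induction js)
  case Nil then show ?case by simp
next
  case (Cons j js)
  show ?case
  proof
    fix x assume x: "x \<in> punctured N"
    have j: "j < N" using Cons.prems by auto
    have "dpart (j # js) (ev N e) x = partial j (dpart js (ev N e)) x" by simp
    also have "\<dots> = partial j (ev N (dss js e)) x"
      using Cons by (intro partial_local[OF _ x j]) auto
    also have "\<dots> = ev N (dss (j # js) e) x" using partial_ev[OF x j] by simp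
    finally show "dpart (j # js) (ev N e) x = ev N (dss (j # js) e) x" .
  qed
qed

lemma ds_comm: "ev N (ds a (ds b e)) x = ev N (ds b (ds a e)) x"
  by (induction e) (auto simp: algebra_simps)

definition sumE :: "ex list \<Rightarrow> ex" where "sumE es = foldr Add es (Cst 0)"

lemma ev_sumE: "ev N (sumE es) x = sum_list (map (\<lambda>e. ev N e x) es)"
  by (induction es) (auto simp: sumE_def)

lemma ds_sumE: "ds j (sumE es) = sumE (map (ds j) es)"
  by (induction es) (auto simp: sumE_def)

definition lap :: "nat \<Rightarrow> ex \<Rightarrow> ex" where
  "lap N e = sumE (map (\<lambda>j. ds j (ds j e)) [0..<N])"

lemma ev_lap: "ev N (lap N e) x = sum_list (map (\<lambda>j. ev N (ds j (ds j e)) x) [0..<N])"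
  by (simp add: lap_def ev_sumE o_def)

definition harm :: "nat \<Rightarrow> ex \<Rightarrow> bool" where
  "harm N e \<longleftrightarrow> (\<forall>y\<in>punctured N. ev N (lap N e) y = 0)"

lemma harm_ds:
  assumes h: "harm N e" and a: "a < N"
  shows "harm N (ds a e)"
  unfolding harm_def
proof
  fix y assume y: "y \<in> punctured N"
  have t: "ev N (ds j (ds j (ds a e))) y = ev N (ds a (ds j (ds j e))) y" if j: "j \<in> set [0..<N]" for j
  proof -
    have "ev N (ds j (ds j (ds a e))) y = ev N (ds j (ds a (ds j e))) y"
      using j by (intro ds_cong[OF _ y]) (auto intro: ds_comm)
    also have "\<dots> = ev N (ds a (ds j (ds j e))) y" by (rule ds_comm)
    finally show ?thesis .
  qed
  have "ev N (lap N (ds a e)) y = sum_list (map (\<lambda>j. ev N (ds a (ds j (ds j e))) y) [0..<N])"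
    unfolding ev_lap using t by (metis (no_types, lifting) map_eq_conv)
  also have "\<dots> = ev N (ds a (lap N e)) y"
    by (simp add: lap_def ds_sumE ev_sumE o_def)
  also have "\<dots> = ev N (ds a (Cst 0)) y"
    using h a y by (intro ds_cong) (auto simp: harm_def)
  finally show "ev N (lap N (ds a e)) y = 0" by simp
qed

lemma harm_dss: "harm N e \<Longrightarrow> set js \<subseteq> {..<N} \<Longrightarrow> harm N (dss js e)"
  by (induction js) (auto intro: harm_ds)

definition W :: "nat \<Rightarrow> nat \<Rightarrow> ex \<Rightarrow> ex" where
  "W N k e = sumE (map (\<lambda>is. Mul (dss is e) (dss is e)) (List.n_lists k [0..<N]))"

lemma ev_W: "ev N (W N k e) x = sum_list (map (\<lambda>is. (ev N (dss is e) x)\<^sup>2) (List.n_lists k [0..<N]))"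
  by (simp add: W_def ev_sumE o_def power2_eq_square)

lemma sum_list_swap:
  fixes f :: "'a \<Rightarrow> 'b \<Rightarrow> real"
  shows
  "sum_list (map (\<lambda>a. sum_list (map (\<lambda>b. f a b) ys)) xs) = sum_list (map (\<lambda>b. sum_list (map (\<lambda>a. f a b) xs)) ys)"
proof (induction xs)
  case Nil then show ?case by (induction ys) auto
next
  case (Cons a xs)
  have "sum_list (map (\<lambda>b. f a b + sum_list (map (\<lambda>a. f a b) xs)) ys)
     = sum_list (map (\<lambda>b. f a b) ys) + sum_list (map (\<lambda>b. sum_list (map (\<lambda>a. f a b) xs)) ys)"
    by (rule sum_list_addf)
  with Cons show ?case by simp
qed

lemma sum_list_concat: "sum_list (concat xss) = sum_list (map sum_list (xss :: real list list))"
  by (induction xss) auto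

lemma W_rec:
  assumes h: "harm N e" and y: "y \<in> punctured N"
  shows "ev N (W N (Suc k) e) y = ev N (lap N (W N k e)) y / 2"
proof -
  let ?L = "List.n_lists k [0..<N]"
  have hv: "harm N (dss is e)" if "is \<in> set ?L" for "is"
    using that by (intro harm_dss[OF h]) (auto simp: set_n_lists)
  have "ev N (lap N (W N k e)) y =
    sum_list (map (\<lambda>j. sum_list (map (\<lambda>is. ev N (ds j (ds j (Mul (dss is e) (dss is e)))) y) ?L)) [0..<N])"
    by (simp add: ev_lap W_def ds_sumE ev_sumE o_def)
  also have "\<dots> = sum_list (map (\<lambda>is. sum_list (map (\<lambda>j. ev N (ds j (ds j (Mul (dss is e) (dss is e)))) y) [0..<N])) ?L)"
    by (rule sum_list_swap)
  also have "\<dots> = sum_list (map (\<lambda>is. 2 * sum_list (map (\<lambda>j. (ev N (ds j (dss is e)) y)\<^sup>2) [0..<N])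
        + 2 * ev N (dss is e) y * ev N (lap N (dss is e)) y) ?L)"
    by (simp add: ev_lap sum_list_addf sum_list_const_mult algebra_simps power2_eq_square)
  also have "\<dots> = sum_list (map (\<lambda>is. 2 * sum_list (map (\<lambda>j. (ev N (ds j (dss is e)) y)\<^sup>2) [0..<N])) ?L)"
    using hv y by (intro arg_cong[where f=sum_list] map_cong) (auto simp: harm_def)
  also have "\<dots> = 2 * ev N (W N (Suc k) e) y"
    by (simp add: ev_W sum_list_const_mult o_def map_concat sum_list_concat)
  finally show ?thesis by simp
qed

lemma lap_cong:
  assumes eq: "\<forall>y\<in>punctured N. ev N e1 y = ev N e2 y" and y: "y \<in> punctured N"
  shows "ev N (lap N e1) y = ev N (lap N e2) y"
proof -
  have "ev N (ds j (ds j e1)) y = ev N (ds j (ds j e2)) y" if "j < N" for j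
  proof -
    have "\<forall>z\<in>punctured N. ev N (ds j e1) z = ev N (ds j e2) z"
      using eq that by (auto intro: ds_cong)
    then show ?thesis using y that by (intro ds_cong) auto
  qed
  then show ?thesis unfolding ev_lap by (intro arg_cong[where f=sum_list] map_cong) auto
qed

lemma sum_list_upt_eq: "sum_list (map f [0..<N]) = (\<Sum>j<N. (f j :: real))"
  by (simp add: sum_set_upt_conv_sum_list_nat[symmetric] atLeast0LessThan)

lemma sq_powr: assumes "(r::real) > 0" shows "r\<^sup>2 * r powr (a - 2) = r powr a"
proof -
  have "r\<^sup>2 = r powr 2" using powr_realpow[of r 2] assms by simp
  moreover have "r powr 2 * r powr (a - 2) = r powr (2 + (a - 2))" by (rule powr_add[symmetric])
  ultimately show ?thesis by simp
qed

lemma ev_lap_pow: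
  assumes y: "y \<in> punctured N"
  shows "ev N (lap N (Mul (Cst c) (Rp p))) y = c * p * (p + real N - 2) * eucl_norm N y powr (p - 2)"
proof -
  let ?r = "eucl_norm N y"
  have r: "?r > 0" using norm_pos[OF y] .
  have r2: "?r\<^sup>2 * ?r powr (p - 2 - 2) = ?r powr (p - 2)"
    by (rule sq_powr[OF r])
  have "ev N (lap N (Mul (Cst c) (Rp p))) y
     = (\<Sum>j<N. c * p * ?r powr (p - 2) + c * p * (p - 2) * ?r powr (p - 2 - 2) * (y j)\<^sup>2)"
    unfolding ev_lap sum_list_upt_eq by (intro sum.cong) (auto simp: algebra_simps power2_eq_square)
  also have "\<dots> = real N * (c * p * ?r powr (p - 2)) + c * p * (p - 2) * ?r powr (p - 2 - 2) * ?r\<^sup>2"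
    by (simp add: sum.distrib sum_distrib_left[symmetric] norm_sq)
  also have "\<dots> = c * p * (p + real N - 2) * ?r powr (p - 2)"
    using r2 by (simp add: algebra_simps)
  finally show ?thesis .
qed

lemma harm_Rp: "harm N (Mul (Cst 1) (Rp (2 - real N)))"
  unfolding harm_def by (auto simp: ev_lap_pow)

lemma harm_Lg: "harm 2 Lg"
  unfolding harm_def
proof
  fix y assume y: "y \<in> punctured 2"
  let ?r = "eucl_norm 2 y"
  have r: "?r > 0" using norm_pos[OF y] .
  have r2: "?r\<^sup>2 * ?r powr (- 2 - 2) = ?r powr (- 2)"
    by (rule sq_powr[OF r])
  have "ev 2 (lap 2 Lg) y = (\<Sum>j<2. ?r powr (-2) - 2 * ?r powr (-2 - 2) * (y j)\<^sup>2)"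
    unfolding ev_lap sum_list_upt_eq by (intro sum.cong) (auto simp: algebra_simps power2_eq_square)
  also have "\<dots> = 2 * ?r powr (-2) - 2 * ?r powr (-2 - 2) * ?r\<^sup>2"
    by (simp only: sum_subtractf sum_distrib_left[symmetric] norm_sq) simp
  also have "\<dots> = 0" using r2 by (simp add: algebra_simps)
  finally show "ev 2 (lap 2 Lg) y = 0" .
qed

lemma W_step:
  assumes h: "harm N e" and W: "\<forall>y\<in>punctured N. ev N (W N k e) y = c * eucl_norm N y powr p"
  shows "\<forall>y\<in>punctured N. ev N (W N (Suc k) e) y = c * p * (p + real N - 2) / 2 * eucl_norm N y powr (p - 2)"
proof
  fix y assume y: "y \<in> punctured N"
  have "ev N (W N (Suc k) e) y = ev N (lap N (W N k e)) y / 2" by (rule W_rec[OF h y])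
  also have "\<dots> = ev N (lap N (Mul (Cst c) (Rp p))) y / 2"
    using W y by (subst lap_cong[OF _ y]) auto
  finally show "ev N (W N (Suc k) e) y = c * p * (p + real N - 2) / 2 * eucl_norm N y powr (p - 2)"
    using ev_lap_pow[OF y] by simp
qed

lemma grad_W:
  assumes x: "x \<in> punctured N"
  shows "grad_norm N k (ev N e) x = sqrt (ev N (W N k e) x)"
proof -
  let ?L = "List.n_lists k [0..<N]"
  have S: "{is. length is = k \<and> set is \<subseteq> {..<N}} = set ?L"
    by (simp add: set_n_lists atLeast0LessThan)
  have "(\<Sum>is\<in>{is. length is = k \<and> set is \<subseteq> {..<N}}. (dpart is (ev N e) x)\<^sup>2)
      = (\<Sum>is\<in>set ?L. (ev N (dss is e) x)\<^sup>2)"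
    unfolding S
  proof (rule sum.cong[OF refl])
    fix "is" assume "is \<in> set ?L"
    then have "set is \<subseteq> {..<N}" by (auto simp: set_n_lists atLeast0LessThan)
    then show "(dpart is (ev N e) x)\<^sup>2 = (ev N (dss is e) x)\<^sup>2" using dpart_ev x by simp
  qed
  also have "\<dots> = sum_list (map (\<lambda>is. (ev N (dss is e) x)\<^sup>2) ?L)"
    by (rule sum_list_distinct_conv_sum_set[symmetric]) (simp add: distinct_n_lists)
  finally show ?thesis unfolding grad_norm_def ev_W by simp
qed

lemma W_nonneg: "ev N (W N k e) x \<ge> 0"
  unfolding ev_W by (rule sum_list_nonneg) auto



definition G :: "nat \<Rightarrow> nat \<Rightarrow> real" where
  "G N k = (\<Prod>i<k. (real N + real i - 2) * (real N + 2 * real i - 2))"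

lemma W_Rp: "\<forall>y\<in>punctured N. ev N (W N k (Mul (Cst 1) (Rp (2 - real N)))) y
    = G N k * eucl_norm N y powr (2 * (2 - real N) - 2 * real k)"
proof (induction k)
  case 0
  show ?case
  proof
    fix y assume y: "y \<in> punctured N"
    let ?r = "eucl_norm N y" and ?s = "2 - real N"
    have 1: "?r powr ?s * ?r powr ?s = ?r powr (?s + ?s)" by (rule powr_add[symmetric])
    have 2: "ev N (W N 0 (Mul (Cst 1) (Rp (2 - real N)))) y = ?r powr ?s * ?r powr ?s"
      by (simp add: ev_W power2_eq_square)
    have 3: "?s + ?s = 2 * (2 - real N) - 2 * real 0" by simp
    show "ev N (W N 0 (Mul (Cst 1) (Rp (2 - real N)))) y = G N 0 * ?r powr (2 * (2 - real N) - 2 * real 0)"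
      unfolding 2 1 3 by (simp add: G_def)
  qed
next
  case (Suc k)
  have "\<forall>y\<in>punctured N. ev N (W N (Suc k) (Mul (Cst 1) (Rp (2 - real N)))) y =
     G N k * (2 * (2 - real N) - 2 * real k) * ((2 * (2 - real N) - 2 * real k) + real N - 2) / 2
       * eucl_norm N y powr ((2 * (2 - real N) - 2 * real k) - 2)"
    by (rule W_step[OF harm_Rp Suc.IH])
  moreover have "G N k * (2 * (2 - real N) - 2 * real k) * ((2 * (2 - real N) - 2 * real k) + real N - 2) / 2
      = G N (Suc k)"
  proof -
    have g: "G N (Suc k) = G N k * ((real N + real k - 2) * (real N + 2 * real k - 2))"
      by (simp add: G_def)
    show ?thesis unfolding g by (simp add: field_simps)
  qed
  moreover have "(2 * (2 - real N) - 2 * real k) - 2 = 2 * (2 - real N) - 2 * real (Suc k)" by simp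
  ultimately show ?case by metis
qed

lemma gamma_G: assumes "N \<ge> 1" shows "gamma N (2 - real N) k = G N k"
proof -
  let ?s = "2 - real N"
  have fe: "(\<lambda>y. eucl_norm N y powr ?s) = ev N (Mul (Cst 1) (Rp ?s))" by auto
  have P: "(eucl_norm N x powr (real k - ?s) * grad_norm N k (\<lambda>y. eucl_norm N y powr ?s) x)\<^sup>2 = G N k"
    if x: "x \<in> punctured N" for x
  proof -
    let ?r = "eucl_norm N x"
    have r: "?r > 0" using norm_pos[OF x] .
    have Q: "ev N (W N k (Mul (Cst 1) (Rp ?s))) x = G N k * ?r powr (2 * ?s - 2 * real k)"
      using W_Rp x by blast
    have "(?r powr (real k - ?s) * grad_norm N k (\<lambda>y. eucl_norm N y powr ?s) x)\<^sup>2
       = (?r powr (real k - ?s))\<^sup>2 * ev N (W N k (Mul (Cst 1) (Rp ?s))) x"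
      unfolding fe grad_W[OF x] power_mult_distrib using W_nonneg by simp
    also have "(?r powr (real k - ?s))\<^sup>2 = ?r powr ((real k - ?s) + (real k - ?s))"
      unfolding power2_eq_square by (rule powr_add[symmetric])
    also have "?r powr ((real k - ?s) + (real k - ?s)) * ev N (W N k (Mul (Cst 1) (Rp ?s))) x
        = G N k * (?r powr ((real k - ?s) + (real k - ?s)) * ?r powr (2 * ?s - 2 * real k))"
      unfolding Q by simp
    also have "?r powr ((real k - ?s) + (real k - ?s)) * ?r powr (2 * ?s - 2 * real k)
        = ?r powr (((real k - ?s) + (real k - ?s)) + (2 * ?s - 2 * real k))"
      by (rule powr_add[symmetric])
    also have "((real k - ?s) + (real k - ?s)) + (2 * ?s - 2 * real k) = 0" by simp
    finally show ?thesis using r by simp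
  qed
  define e0 :: "nat \<Rightarrow> real" where "e0 = (\<lambda>i. if i = 0 then 1 else 0)"
  have e0: "e0 \<in> punctured N" using assms
    by (auto simp: punctured_def e0_def fun_eq_iff intro!: exI[of _ 0])
  show ?thesis unfolding gamma_def
    by (rule the_equality) (use P e0 in auto)
qed

lemma falling_Suc: "falling (a + 1) (Suc k) = (a + 1) * falling a k"
  unfolding falling_def by (subst prod.lessThan_Suc_shift) (simp add: algebra_simps)

lemma G_closed: "G N k = 2 ^ k * falling (real N / 2 + real k - 2) k * falling (real N + real k - 3) k"
proof (induction k)
  case 0 then show ?case by (simp add: G_def falling_def)
next
  case (Suc k)
  have a: "real N / 2 + real (Suc k) - 2 = (real N / 2 + real k - 2) + 1" by simp
  have b: "real N + real (Suc k) - 3 = (real N + real k - 3) + 1" by simp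
  have "G N (Suc k) = G N k * ((real N + real k - 2) * (real N + 2 * real k - 2))"
    by (simp add: G_def)
  also have "\<dots> = 2 ^ Suc k * falling (real N / 2 + real (Suc k) - 2) (Suc k) * falling (real N + real (Suc k) - 3) (Suc k)"
    unfolding Suc.IH a b falling_Suc by (simp add: algebra_simps)
  finally show ?case .
qed

lemma W_Lg: "\<forall>y\<in>punctured 2. ev 2 (W 2 (Suc k) Lg) y
    = 2 ^ k * (fact k)\<^sup>2 * eucl_norm 2 y powr (- 2 - 2 * real k)"
proof (induction k)
  case 0
  show ?case
  proof
    fix y assume y: "y \<in> punctured 2"
    let ?r = "eucl_norm 2 y"
    have r: "?r > 0" using norm_pos[OF y] .
    have n: "List.n_lists 1 [0..<2] = [[0], [1]]" by (simp add: upt_rec)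
    have sq: "?r\<^sup>2 = (y 0)\<^sup>2 + (y 1)\<^sup>2" unfolding norm_sq by (simp add: numeral_2_eq_2)
    have p: "?r powr (-2) * ?r powr (-2) = ?r powr (-2 + -2)" by (rule powr_add[symmetric])
    have "ev 2 (W 2 1 Lg) y = ?r\<^sup>2 * (?r powr (-2) * ?r powr (-2))"
      unfolding ev_W n sq by (simp add: algebra_simps power2_eq_square)
    also have "\<dots> = ?r powr (-2)" unfolding p using sq_powr[OF r, of "-2"] by simp
    finally show "ev 2 (W 2 (Suc 0) Lg) y = 2 ^ 0 * (fact 0)\<^sup>2 * ?r powr (- 2 - 2 * real 0)" by simp
  qed
next
  case (Suc k)
  have "\<forall>y\<in>punctured 2. ev 2 (W 2 (Suc (Suc k)) Lg) y =
     2 ^ k * (fact k)\<^sup>2 * (- 2 - 2 * real k) * ((- 2 - 2 * real k) + real 2 - 2) / 2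
       * eucl_norm 2 y powr ((- 2 - 2 * real k) - 2)"
    by (rule W_step[OF harm_Lg Suc.IH])
  moreover have "2 ^ k * (fact k)\<^sup>2 * (- 2 - 2 * real k) * ((- 2 - 2 * real k) + real 2 - 2) / 2
      = (2 ^ Suc k * (fact (Suc k))\<^sup>2 :: real)"
    by (simp add: field_simps power2_eq_square)
  moreover have "(- 2 - 2 * real k) - 2 = - 2 - 2 * real (Suc k)" by simp
  ultimately show ?case by metis
qed

lemma ell_val: assumes "k \<ge> 1" shows "ell 2 k = 2 ^ (k - 1) * (fact (k - 1))\<^sup>2"
proof -
  obtain m where k: "k = Suc m" using assms by (cases k) auto
  have fe: "(\<lambda>y. ln (eucl_norm 2 y)) = ev 2 Lg" by auto
  have P: "(eucl_norm 2 x ^ k * grad_norm 2 k (\<lambda>y. ln (eucl_norm 2 y)) x)\<^sup>2 = 2 ^ m * (fact m)\<^sup>2"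
    if x: "x \<in> punctured 2" for x
  proof -
    let ?r = "eucl_norm 2 x"
    have r: "?r > 0" using norm_pos[OF x] .
    have Q: "ev 2 (W 2 k Lg) x = 2 ^ m * (fact m)\<^sup>2 * ?r powr (- 2 - 2 * real m)"
      using W_Lg x k by blast
    have "(?r ^ k * grad_norm 2 k (\<lambda>y. ln (eucl_norm 2 y)) x)\<^sup>2
       = (?r powr real k)\<^sup>2 * ev 2 (W 2 k Lg) x"
      unfolding fe grad_W[OF x] power_mult_distrib using W_nonneg r by (simp add: powr_realpow)
    also have "(?r powr real k)\<^sup>2 = ?r powr (real k + real k)"
      unfolding power2_eq_square by (rule powr_add[symmetric])
    also have "?r powr (real k + real k) * ev 2 (W 2 k Lg) x
        = 2 ^ m * (fact m)\<^sup>2 * (?r powr (real k + real k) * ?r powr (- 2 - 2 * real m))"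
      unfolding Q by simp
    also have "?r powr (real k + real k) * ?r powr (- 2 - 2 * real m)
        = ?r powr ((real k + real k) + (- 2 - 2 * real m))"
      by (rule powr_add[symmetric])
    also have "(real k + real k) + (- 2 - 2 * real m) = 0" using k by simp
    finally show ?thesis using r by simp
  qed
  define e0 :: "nat \<Rightarrow> real" where "e0 = (\<lambda>i. if i = 0 then 1 else 0)"
  have e0: "e0 \<in> punctured 2"
    by (auto simp: punctured_def e0_def fun_eq_iff intro!: exI[of _ 0])
  have "ell 2 k = 2 ^ m * (fact m)\<^sup>2" unfolding ell_def
    by (rule the_equality) (use P e0 in auto)
  then show ?thesis using k by simp
qed

theorem theorem1p3:
  shows "(\<forall>(N::nat) (k::nat). N \<ge> 1 \<longrightarrow>
            gamma N (- (real N - 2)) k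
              = 2 ^ k * falling (real N / 2 + real k - 2) k * falling (real N + real k - 3) k)
       \<and> (\<forall>k::nat. k \<ge> 1 \<longrightarrow> ell 2 k = 2 ^ (k - 1) * (fact (k - 1))\<^sup>2)"
proof (intro conjI allI impI)
  fix N k :: nat assume "N \<ge> 1"
  have "- (real N - 2) = 2 - real N" by simp
  then show "gamma N (- (real N - 2)) k
              = 2 ^ k * falling (real N / 2 + real k - 2) k * falling (real N + real k - 3) k"
    using gamma_G[OF \<open>N \<ge> 1\<close>] G_closed by simp
next
  fix k :: nat assume "k \<ge> 1"
  then show "ell 2 k = 2 ^ (k - 1) * (fact (k - 1))\<^sup>2" by (rule ell_val)
qed

end
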